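(* Let $P, Q \subseteq \mathbb{R}^d$ be rational polytopes such that for every integer vector $w \in \mathbb{Z}^d$ and every real $s > 0$ we have $L_{P + w}(s) = L_{Q + w}(s)$. Then $P = Q$.
   Context: For a polytope $P \subseteq \mathbb{R}^d$ and real $s \ge 0$, the real Ehrhart function is $L_P(s) = \#(sP \cap \mathbb{Z}^d)$, where $sP = \{sx : x \in P\}$. A rational polytope is the convex hull of finitely many points of $\mathbb{Q}^d$. *)

theory Defs
  imports "HOL-Analysis.Analysis"
begin

definition int_point :: "real^'n \<Rightarrow> bool" where
  "int_point x \<longleftrightarrow> (\<forall>i. x $ i \<in> \<int>)"

definition rat_point :: "real^'n \<Rightarrow> bool" where
  "rat_point x \<longleftrightarrow> (\<forall>i. x $ i \<in> \<rat>)"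

definition rational_polytope :: "(real^'n) set \<Rightarrow> bool" where
  "rational_polytope P \<longleftrightarrow> (\<exists>S. finite S \<and> (\<forall>x\<in>S. rat_point x) \<and> P = convex hull S)"

definition ehrhart :: "(real^'n) set \<Rightarrow> real \<Rightarrow> nat" where
  "ehrhart P s = card {x \<in> (\<lambda>y. s *\<^sub>R y) ` P. int_point x}"

end

theory Submission
  imports Defs
begin

lemma common_den:
  fixes f :: "'a \<Rightarrow> real"
  assumes "finite I" "\<forall>i\<in>I. f i \<in> \<rat>"
  shows "\<exists>N::int. N > 0 \<and> (\<forall>i\<in>I. of_int N * f i \<in> \<int>)"
  using assms
proof (induction I rule: finite_induct)
  case empty
  then show ?case by (rule_tac x=1 in exI) auto
next
  case (insert a I)
  then obtain N::int where N: "N > 0" "\<forall>i\<in>I. of_int N * f i \<in> \<int>" by auto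
  from insert have "f a \<in> \<rat>" by auto
  then obtain p q :: int where pq: "q > 0" "f a = of_int p / of_int q" by (rule Rats_cases')
  show ?case
  proof (rule exI[of _ "N*q"], intro conjI ballI)
    show "N*q > 0" using N pq by simp
    fix i assume "i \<in> insert a I"
    then show "of_int (N*q) * f i \<in> \<int>"
    proof
      assume "i = a"
      have "of_int (N*q) * f a = (of_int (N*p)::real)" using pq by (simp add: field_simps)
      then show ?thesis using \<open>i = a\<close> by (metis Ints_of_int)
    next
      assume "i \<in> I"
      then have "of_int N * f i \<in> \<int>" using N by auto
      then obtain c where "of_int N * f i = of_int c" by (auto elim: Ints_cases)
      then have "of_int (N*q) * f i = (of_int (c*q)::real)" by (simp add: algebra_simps)
      then show ?thesis by (metis Ints_of_int)
    qed
  qed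
qed

lemma int_abs_lt1: "\<bar>z::real\<bar> < 1 \<Longrightarrow> z \<in> \<int> \<Longrightarrow> z = 0"
proof -
  assume a: "\<bar>z\<bar> < 1" "z \<in> \<int>"
  then obtain c where c: "z = of_int c" by (auto elim: Ints_cases)
  then have "\<bar>c\<bar> < 1" using a by linarith
  then show ?thesis using c by simp
qed

lemma main:
  fixes P Q :: "(real^'n) set"
  assumes bP: "bounded P" and bQ: "bounded Q" and xP: "x \<in> P" and rx: "rat_point x"
    and H: "\<And>w s. int_point w \<Longrightarrow> s > 0 \<Longrightarrow>
           ehrhart ((\<lambda>x. x + w) ` P) s = ehrhart ((\<lambda>x. x + w) ` Q) s"
  shows "x \<in> Q"
proof -
  obtain N::int where N: "N > 0" "\<forall>i\<in>UNIV. of_int N * x$i \<in> \<int>"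
    using common_den[of UNIV "\<lambda>i. x$i"] rx unfolding rat_point_def by auto
  have "bounded (P \<union> Q)" using bP bQ by simp
  then obtain B where B: "\<forall>p\<in>P \<union> Q. norm p \<le> B" by (auto simp: bounded_iff)
  have Bc: "\<bar>p$i\<bar> \<le> B" if "p \<in> P \<union> Q" for p i
    using B that component_le_norm_cart[of p i] by (meson order_trans)
  obtain k::nat where k: "real k > 2*B" using reals_Archimedean2 by blast
  define m where "m = real k * of_int N + 1"
  define s where "s = of_int N / m"
  define a where "a = ((\<chi> i. of_int N * x$i) :: real^'n)"
  define w where "w = real k *\<^sub>R a"
  have Npos: "(of_int N::real) > 0" using N by simp
  have mpos: "m > 0" proof -
    have "real k * of_int N \<ge> 0" using Npos by simp
    then show ?thesis unfolding m_def by linarith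
  qed
  have spos: "s > 0" unfolding s_def using Npos mpos by simp
  have sk: "s * real k < 1"
  proof -
    have "s * real k = (real k * of_int N) / m" unfolding s_def by simp
    also have "\<dots> < 1" using mpos unfolding m_def by (simp add: divide_less_eq)
    finally show ?thesis .
  qed
  have aint: "a$i \<in> \<int>" for i using N unfolding a_def by simp
  have wint: "int_point w" unfolding int_point_def w_def using aint by simp
  have sxw: "s *\<^sub>R (x + w) = a"
  proof -
    have "x + w = m *\<^sub>R x" unfolding w_def a_def m_def
      by (simp add: vec_eq_iff algebra_simps)
    then show ?thesis unfolding s_def a_def using mpos by (simp add: vec_eq_iff)
  qed
  have uniq: "p = x" if pPQ: "p \<in> P \<union> Q" and ip: "int_point (s *\<^sub>R (p + w))" for p
  proof -
    have "p$i = x$i" for i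
    proof -
      have ci: "s * (p$i + w$i) \<in> \<int>" using ip unfolding int_point_def by simp
      have ei: "s * (x$i + w$i) = a$i" using sxw by (simp add: vec_eq_iff)
      have d: "s * (p$i + w$i) - s * (x$i + w$i) \<in> \<int>" using ci ei aint by simp
      have bd: "\<bar>p$i - x$i\<bar> \<le> 2*B" using Bc[OF pPQ, of i] Bc[of x i] xP by force
      have "\<bar>s * (p$i + w$i) - s * (x$i + w$i)\<bar> = s * \<bar>p$i - x$i\<bar>"
      proof -
        have "s * (p$i + w$i) - s * (x$i + w$i) = s * (p$i - x$i)" by (simp add: algebra_simps)
        then show ?thesis using spos by (simp add: abs_mult)
      qed
      also have "\<dots> \<le> s * (2*B)" using bd spos by simp
      also have "\<dots> < s * real k" using k spos by simp
      also have "\<dots> < 1" by (rule sk)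
      finally have "\<bar>s * (p$i + w$i) - s * (x$i + w$i)\<bar> < 1" .
      then have "s * (p$i + w$i) - s * (x$i + w$i) = 0"
        using d int_abs_lt1 by blast
      then show ?thesis using spos by (simp add: algebra_simps)
    qed
    then show ?thesis by (simp add: vec_eq_iff)
  qed
  have imgeq: "(\<lambda>y. s *\<^sub>R y) ` (\<lambda>x. x + w) ` S = (\<lambda>p. s *\<^sub>R (p + w)) ` S" for S :: "(real^'n) set"
    by auto
  have "{y \<in> (\<lambda>y. s *\<^sub>R y) ` (\<lambda>x. x + w) ` P. int_point y} = {a}"
  proof
    have "a \<in> (\<lambda>p. s *\<^sub>R (p + w)) ` P" using sxw xP by (metis image_eqI)
    moreover have "int_point a" unfolding int_point_def using aint by blast
    ultimately show "{a} \<subseteq> {y \<in> (\<lambda>y. s *\<^sub>R y) ` (\<lambda>x. x + w) ` P. int_point y}"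
      unfolding imgeq by blast
    show "{y \<in> (\<lambda>y. s *\<^sub>R y) ` (\<lambda>x. x + w) ` P. int_point y} \<subseteq> {a}"
    proof
      fix y assume "y \<in> {y \<in> (\<lambda>y. s *\<^sub>R y) ` (\<lambda>x. x + w) ` P. int_point y}"
      then obtain p where p: "p \<in> P" "y = s *\<^sub>R (p + w)" "int_point y" unfolding imgeq by blast
      then have "p = x" using uniq by blast
      then show "y \<in> {a}" using p sxw by simp
    qed
  qed
  then have "ehrhart ((\<lambda>x. x + w) ` P) s = 1" unfolding ehrhart_def by simp
  then have "ehrhart ((\<lambda>x. x + w) ` Q) s = 1" using H[OF wint spos] by simp
  then have "{y \<in> (\<lambda>y. s *\<^sub>R y) ` (\<lambda>x. x + w) ` Q. int_point y} \<noteq> {}"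
    unfolding ehrhart_def by (metis card.empty zero_neq_one)
  then obtain q where "q \<in> Q" "int_point (s *\<^sub>R (q + w))" unfolding imgeq by auto
  then have "q = x" using uniq by blast
  with \<open>q \<in> Q\<close> show ?thesis by simp
qed

lemma incl:
  fixes P Q :: "(real^'n) set"
  assumes "rational_polytope P" and "rational_polytope Q"
    and H: "\<And>w s. int_point w \<Longrightarrow> s > 0 \<Longrightarrow>
           ehrhart ((\<lambda>x. x + w) ` P) s = ehrhart ((\<lambda>x. x + w) ` Q) s"
  shows "P \<subseteq> Q"
proof -
  obtain S where S: "finite S" "\<forall>x\<in>S. rat_point x" "P = convex hull S"
    using assms(1) unfolding rational_polytope_def by blast
  obtain T where T: "finite T" "Q = convex hull T"
    using assms(2) unfolding rational_polytope_def by blast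
  have bP: "bounded P" "bounded Q" using S(1,3) T finite_imp_bounded_convex_hull by simp_all
  have "S \<subseteq> Q"
  proof
    fix x assume "x \<in> S"
    have "x \<in> P" using S(3) \<open>x \<in> S\<close> hull_inc by metis
    moreover have "rat_point x" using S(2) \<open>x \<in> S\<close> by blast
    ultimately show "x \<in> Q" using main[OF bP _ _ H] by blast
  qed
  moreover have "convex Q" using T(2) convex_convex_hull by simp
  ultimately show ?thesis using S(3) hull_minimal[of S Q convex] by simp
qed

theorem theorem2:
  fixes P Q :: "(real^'n) set"
  assumes "rational_polytope P" and "rational_polytope Q"
    and "\<And>w s. int_point w \<Longrightarrow> s > 0 \<Longrightarrow>
           ehrhart ((\<lambda>x. x + w) ` P) s = ehrhart ((\<lambda>x. x + w) ` Q) s"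
  shows "P = Q"
proof
  show "P \<subseteq> Q" by (rule incl[OF assms])
  have H': "ehrhart ((\<lambda>x. x + w) ` Q) s = ehrhart ((\<lambda>x. x + w) ` P) s"
    if "int_point w" "s > 0" for w s using assms(3)[OF that] by simp
  show "Q \<subseteq> P" by (rule incl[OF assms(2,1) H'])
qed

end
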